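(* Let $L=\mathbb Z^3\subset\mathbb R^3$ with $B(x,y)=xGy^T$, $G=\begin{pmatrix}2&-1&0\\-1&2&-1\\0&-1&2\end{pmatrix}$ (the $A_3$ lattice), $Q(x)=\frac12B(x,x)$, and for $\alpha,\beta\in\mathbb Q^3$ put $\theta_{\alpha,\beta}(\tau,z)=\sum_{v\in\mathbb Z^3}e(B(\beta,v))\,e(\tau Q(\alpha+v)+B(\alpha+v,z))$ on $\mathbb H\times\mathbb C^3$. Let $A=\{(0,0,0),(\frac12,0,\frac12)\}$ and $\mathcal B=\{(0,0,0),(0,\frac12,0),(\frac12,0,0),(\frac12,\frac12,0)\}$. Then the five functions $\theta_{\alpha,0}^2$ ($\alpha\in A$), $\theta_{0,\beta}^2$ ($\beta\in\mathcal B$) are $\mathbb C$-linearly independent, and for any $\alpha\in A$, $\beta\in\mathcal B$, $$\theta_{\alpha,\beta}^2+\theta_{0,0}^2=\theta_{\alpha,0}^2+\theta_{0,\beta}^2.$$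
   Context: $e(x)=\exp(2\pi ix)$, $\mathbb H$ the upper half plane; $B$ is extended bilinearly to $\mathbb C^3$. *)

theory Defs
  imports "HOL-Analysis.Analysis"
begin

type_synonym cvec3 = "complex \<times> complex \<times> complex"

definition e :: "complex \<Rightarrow> complex" where
  "e x = exp (2 * of_real pi * \<i> * x)"

fun B :: "cvec3 \<Rightarrow> cvec3 \<Rightarrow> complex" where
  "B (x1, x2, x3) (y1, y2, y3) =
     2*x1*y1 - x1*y2 - x2*y1 + 2*x2*y2 - x2*y3 - x3*y2 + 2*x3*y3"

definition Q :: "cvec3 \<Rightarrow> complex" where
  "Q x = B x x / 2"

fun vadd :: "cvec3 \<Rightarrow> cvec3 \<Rightarrow> cvec3" where
  "vadd (x1, x2, x3) (y1, y2, y3) = (x1 + y1, x2 + y2, x3 + y3)"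

fun ofQ :: "rat \<times> rat \<times> rat \<Rightarrow> cvec3" where
  "ofQ (a, b, c) = (of_rat a, of_rat b, of_rat c)"

fun ofZ :: "int \<times> int \<times> int \<Rightarrow> cvec3" where
  "ofZ (a, b, c) = (of_int a, of_int b, of_int c)"

definition theta :: "rat \<times> rat \<times> rat \<Rightarrow> rat \<times> rat \<times> rat \<Rightarrow> complex \<Rightarrow> cvec3 \<Rightarrow> complex" where
  "theta \<alpha> \<beta> \<tau> z = (\<Sum>\<^sub>\<infinity>v\<in>(UNIV :: (int \<times> int \<times> int) set).
      e (B (ofQ \<beta>) (ofZ v)) * e (\<tau> * Q (vadd (ofQ \<alpha>) (ofZ v)) + B (vadd (ofQ \<alpha>) (ofZ v)) z))"

definition setA :: "(rat \<times> rat \<times> rat) set" where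
  "setA = {(0,0,0), (1/2,0,1/2)}"

definition setB :: "(rat \<times> rat \<times> rat) set" where
  "setB = {(0,0,0), (0,1/2,0), (1/2,0,0), (1/2,1/2,0)}"

definition F5 :: "nat \<Rightarrow> complex \<Rightarrow> cvec3 \<Rightarrow> complex" where
  "F5 i \<tau> z = (case i of
      0 \<Rightarrow> theta (0,0,0) (0,0,0) \<tau> z ^ 2
    | Suc 0 \<Rightarrow> theta (1/2,0,1/2) (0,0,0) \<tau> z ^ 2
    | Suc (Suc 0) \<Rightarrow> theta (0,0,0) (0,1/2,0) \<tau> z ^ 2
    | Suc (Suc (Suc 0)) \<Rightarrow> theta (0,0,0) (1/2,0,0) \<tau> z ^ 2
    | _ \<Rightarrow> theta (0,0,0) (1/2,1/2,0) \<tau> z ^ 2)"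

end

theory Submission
  imports Defs "HOL-Real_Asymp.Real_Asymp"
begin


lemma of_rat_complex: "(of_rat q :: complex) = of_real (of_rat q)"
  by (cases q) (simp add: of_rat_rat)

fun Br :: "real\<times>real\<times>real \<Rightarrow> real\<times>real\<times>real \<Rightarrow> real" where
  "Br (x1, x2, x3) (y1, y2, y3) =
     2*x1*y1 - x1*y2 - x2*y1 + 2*x2*y2 - x2*y3 - x3*y2 + 2*x3*y3"

definition Qr :: "real\<times>real\<times>real \<Rightarrow> real" where "Qr x = Br x x / 2"

fun cplx :: "real\<times>real\<times>real \<Rightarrow> cvec3" where
  "cplx (a, b, c) = (of_real a, of_real b, of_real c)"

fun imv :: "cvec3 \<Rightarrow> real\<times>real\<times>real" where
  "imv (a, b, c) = (Im a, Im b, Im c)"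

fun xr :: "rat\<times>rat\<times>rat \<Rightarrow> int\<times>int\<times>int \<Rightarrow> real\<times>real\<times>real" where
  "xr (a1, a2, a3) (v1, v2, v3) = (of_rat a1 + of_int v1, of_rat a2 + of_int v2, of_rat a3 + of_int v3)"

definition tm :: "rat \<times> rat \<times> rat \<Rightarrow> rat \<times> rat \<times> rat \<Rightarrow> complex \<Rightarrow> cvec3 \<Rightarrow> int\<times>int\<times>int \<Rightarrow> complex" where
  "tm \<alpha> \<beta> \<tau> z v = e (B (ofQ \<beta>) (ofZ v)) * e (\<tau> * Q (vadd (ofQ \<alpha>) (ofZ v)) + B (vadd (ofQ \<alpha>) (ofZ v)) z)"

lemma theta_tm: "theta \<alpha> \<beta> \<tau> z = infsum (tm \<alpha> \<beta> \<tau> z) UNIV"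
  unfolding theta_def tm_def by simp

lemma vadd_xr: "vadd (ofQ \<alpha>) (ofZ v) = cplx (xr \<alpha> v)"
  by (cases \<alpha>; cases v) (simp add: of_rat_complex)

lemma B_cplx_Im: "Im (B (cplx x) z) = Br x (imv z)"
  by (cases x; cases z) simp

lemma B_cplx_cplx: "B (cplx x) (cplx y) = of_real (Br x y)"
  by (cases x; cases y) simp

lemma Q_cplx: "Q (cplx x) = of_real (Qr x)"
  unfolding Q_def Qr_def by (simp add: B_cplx_cplx)

lemma B_ofQ_ofZ_Im: "Im (B (ofQ \<beta>) (ofZ v)) = 0"
proof -
  have "ofQ \<beta> = cplx (xr \<beta> (0,0,0))" by (cases \<beta>) (simp add: of_rat_complex)
  moreover have "ofZ v = cplx (xr (0,0,0) v)" by (cases v) simp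
  ultimately show ?thesis by (simp add: B_cplx_cplx)
qed

lemma norm_e: "norm (e w) = exp (-2*pi*Im w)"
  unfolding e_def by (simp add: norm_exp_eq_Re)

lemma norm_tm: "norm (tm \<alpha> \<beta> \<tau> z v) = exp (-2*pi*(Im \<tau> * Qr (xr \<alpha> v) + Br (xr \<alpha> v) (imv z)))"
  unfolding tm_def norm_mult norm_e vadd_xr
  by (simp add: B_ofQ_ofZ_Im Q_cplx B_cplx_Im)


lemma h_summ: "(\<lambda>n::int. exp (- \<bar>real_of_int n\<bar>)) summable_on UNIV"
proof -
  have U: "(UNIV::int set) = range int \<union> range (\<lambda>n. - int (Suc n))"
  proof -
    have "x \<in> range int \<union> range (\<lambda>n. - int (Suc n))" for x :: int
    proof (cases "x \<ge> 0")
      case True then have "x = int (nat x)" by simp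
      then show ?thesis by blast
    next
      case False then have "x = - int (Suc (nat (-x-1)))" by simp
      then show ?thesis by blast
    qed
    then show ?thesis by auto
  qed
  have g: "summable (\<lambda>n::nat. exp (-1::real) ^ n)"
  proof -
    have "norm (exp (-1::real)) < 1" by simp
    from summable_geometric[OF this] show ?thesis .
  qed
  have s1: "(\<lambda>n::nat. exp (- real n)) summable_on UNIV"
  proof (subst summable_on_UNIV_nonneg_real_iff)
    show "summable (\<lambda>n::nat. exp (- real n))"
      using g by (simp add: exp_of_nat_mult[symmetric])
  qed auto
  have s2: "(\<lambda>n::nat. exp (- real (Suc n))) summable_on UNIV"
  proof (subst summable_on_UNIV_nonneg_real_iff)
    have "summable (\<lambda>n::nat. exp (-1::real) * exp (-1) ^ n)" using g by (rule summable_mult)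
    then show "summable (\<lambda>n::nat. exp (- real (Suc n)))"
      by (simp add: exp_of_nat_mult[symmetric] exp_add[symmetric] algebra_simps)
  qed auto
  have a: "(\<lambda>n::int. exp (- \<bar>real_of_int n\<bar>)) summable_on range int"
    by (subst summable_on_reindex) (use s1 in \<open>auto simp: o_def\<close>)
  have b: "(\<lambda>n::int. exp (- \<bar>real_of_int n\<bar>)) summable_on range (\<lambda>n. - int (Suc n))"
    by (subst summable_on_reindex) (use s2 in \<open>auto simp: o_def inj_on_def algebra_simps\<close>)
  show ?thesis using summable_on_union[OF a b] U by simp
qed

lemma prod_summ:
  fixes f :: "'a::countable \<Rightarrow> real" and g :: "'b::countable \<Rightarrow> real"
  assumes "\<And>x. f x \<ge> 0" "\<And>y. g y \<ge> 0" "f summable_on UNIV" "g summable_on UNIV"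
  shows "(\<lambda>(x,y). f x * g y) summable_on UNIV"
proof -
  have f': "(\<lambda>x. norm (f x)) summable_on UNIV" using assms by simp
  have g': "(\<lambda>x. norm (g x)) summable_on UNIV" using assms by simp
  have "(\<lambda>p. norm ((\<lambda>(x,y). f x * g y) p)) summable_on UNIV \<times> UNIV"
    by (rule abs_summable_equivalent[THEN iffD2, OF abs_summable_on_product[OF _ _
        abs_summable_equivalent[THEN iffD1, OF f'] abs_summable_equivalent[THEN iffD1, OF g']]]) auto
  then have "(\<lambda>(x,y). f x * g y) summable_on UNIV \<times> UNIV"
    by (rule abs_summable_summable)
  then show ?thesis by simp
qed

lemma exp3_summ: "(\<lambda>(v1::int, v2::int, v3::int). exp (- (real_of_int \<bar>v1\<bar> + real_of_int \<bar>v2\<bar> + real_of_int \<bar>v3\<bar>))) summable_on UNIV"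
proof -
  have "(\<lambda>(v2::int, v3::int). exp (- real_of_int \<bar>v2\<bar>) * exp (- real_of_int \<bar>v3\<bar>)) summable_on UNIV"
    by (rule prod_summ) (auto simp: h_summ)
  then have "(\<lambda>(v1::int, w). exp (- real_of_int \<bar>v1\<bar>) * (\<lambda>(v2::int, v3::int). exp (- real_of_int \<bar>v2\<bar>) * exp (- real_of_int \<bar>v3\<bar>)) w) summable_on UNIV"
    by (intro prod_summ) (auto simp: h_summ)
  then show ?thesis by (simp add: exp_add[symmetric] case_prod_unfold algebra_simps)
qed

lemma lin_aux: "3*(2*b - s) = p \<Longrightarrow> 0 \<le> p \<Longrightarrow> s/4 \<le> (b::real)/2" by (simp add: field_simps)

lemma Qr_lower: "Qr (x1,x2,x3) \<ge> (x1^2 + x2^2 + x3^2) / 4"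
proof -
  have "3*(2*Br (x1,x2,x3) (x1,x2,x3) - (x1^2 + x2^2 + x3^2)) = (3*x1 - 2*x2)^2 + (3*x3 - 2*x2)^2 + x2^2"
    by (simp add: power2_eq_square algebra_simps)
  moreover have "(3*x1 - 2*x2)^2 + (3*x3 - 2*x2)^2 + x2^2 \<ge> 0" by simp
  ultimately show ?thesis unfolding Qr_def by (rule lin_aux)
qed

lemma sq3: "(\<bar>x1\<bar> + \<bar>x2\<bar> + \<bar>x3\<bar>)^2 \<le> 3*(x1^2 + x2^2 + x3^2::real)"
proof -
  have "(\<bar>x1\<bar> - \<bar>x2\<bar>)^2 + (\<bar>x2\<bar> - \<bar>x3\<bar>)^2 + (\<bar>x1\<bar> - \<bar>x3\<bar>)^2 \<ge> 0" by simp
  then show ?thesis by (simp add: power2_eq_square algebra_simps)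
qed

lemma Br_bound: "\<bar>Br (x1,x2,x3) (y1,y2,y3)\<bar> \<le> 4*(\<bar>y1\<bar>+\<bar>y2\<bar>+\<bar>y3\<bar>) * (\<bar>x1\<bar> + \<bar>x2\<bar> + \<bar>x3\<bar>)"
proof -
  define Y where "Y = 4*(\<bar>y1\<bar>+\<bar>y2\<bar>+\<bar>y3\<bar>)"
  have e: "Br (x1,x2,x3) (y1,y2,y3) = x1*(2*y1 - y2) + x2*(-y1+2*y2-y3) + x3*(-y2+2*y3)" by (simp add: algebra_simps)
  have t: "\<bar>x1*(2*y1 - y2) + x2*(-y1+2*y2-y3) + x3*(-y2+2*y3)\<bar> \<le> \<bar>x1*(2*y1 - y2)\<bar> + \<bar>x2*(-y1+2*y2-y3)\<bar> + \<bar>x3*(-y2+2*y3)\<bar>"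
    by (rule order_trans[OF abs_triangle_ineq add_right_mono[OF abs_triangle_ineq]])
  have 1: "\<bar>x1*(2*y1 - y2)\<bar> \<le> \<bar>x1\<bar> * Y"
    unfolding abs_mult Y_def by (intro mult_left_mono) auto
  have 2: "\<bar>x2*(-y1+2*y2-y3)\<bar> \<le> \<bar>x2\<bar> * Y"
    unfolding abs_mult Y_def by (intro mult_left_mono) auto
  have 3: "\<bar>x3*(-y2+2*y3)\<bar> \<le> \<bar>x3\<bar> * Y"
    unfolding abs_mult Y_def by (intro mult_left_mono) auto
  have d: "\<bar>x1\<bar> * Y + \<bar>x2\<bar> * Y + \<bar>x3\<bar> * Y = Y * (\<bar>x1\<bar> + \<bar>x2\<bar> + \<bar>x3\<bar>)"
    by (simp add: algebra_simps)
  have "\<bar>Br (x1,x2,x3) (y1,y2,y3)\<bar> \<le> Y * (\<bar>x1\<bar> + \<bar>x2\<bar> + \<bar>x3\<bar>)"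
    unfolding e using t 1 2 3 d by linarith
  then show ?thesis unfolding Y_def .
qed

lemma quad_bound:
  fixes t M R :: real assumes "t > 0"
  shows "t * R^2 / 12 - M * R \<ge> R - 3*(M+1)^2/t"
proof -
  have "(t*R/6 - (M+1))^2 \<ge> 0" by simp
  then have "t*t*R^2/36 - t*(M+1)*R/3 + (M+1)^2 \<ge> 0" by (simp add: power2_eq_square algebra_simps)
  then have "(t*t*R^2/36 - t*(M+1)*R/3 + (M+1)^2) * (3/t) \<ge> 0" using assms by simp
  then show ?thesis using assms by (simp add: power2_eq_square field_simps) 
qed

lemma expo_bound:
  fixes t :: real assumes "t > 0"
  shows "t * Qr (x1,x2,x3) + Br (x1,x2,x3) (y1,y2,y3) \<ge>
     (\<bar>x1\<bar> + \<bar>x2\<bar> + \<bar>x3\<bar>) - 3*(4*(\<bar>y1\<bar>+\<bar>y2\<bar>+\<bar>y3\<bar>)+1)^2/t"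
proof -
  define R where "R = \<bar>x1\<bar> + \<bar>x2\<bar> + \<bar>x3\<bar>"
  define M where "M = 4*(\<bar>y1\<bar>+\<bar>y2\<bar>+\<bar>y3\<bar>)"
  have "Qr (x1,x2,x3) \<ge> R^2/12" using Qr_lower[of x1 x2 x3] sq3[of x1 x2 x3] unfolding R_def by linarith
  then have "t * Qr (x1,x2,x3) \<ge> t * R^2/12" using assms by (simp add: mult_left_mono)
  moreover have "Br (x1,x2,x3) (y1,y2,y3) \<ge> - (M * R)" using Br_bound[of x1 x2 x3 y1 y2 y3] unfolding M_def R_def by linarith
  moreover have "t * R^2 / 12 - M * R \<ge> R - 3*(M+1)^2/t" by (rule quad_bound[OF assms])
  ultimately show ?thesis unfolding R_def[symmetric] M_def[symmetric] by linarith
qed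

lemma gauss_summable:
  fixes t :: real assumes t: "t > 0"
  shows "(\<lambda>v. exp (-2*pi*(t * Qr (xr \<alpha> v) + Br (xr \<alpha> v) y))) summable_on UNIV"
proof -
  obtain a1 a2 a3 where \<alpha>: "\<alpha> = (a1,a2,a3)" by (cases \<alpha>)
  obtain y1 y2 y3 where y: "y = (y1,y2,y3)" by (cases y)
  define K where "K = 3*(4*(\<bar>y1\<bar>+\<bar>y2\<bar>+\<bar>y3\<bar>)+1)^2/t"
  define A where "A = \<bar>real_of_rat a1\<bar> + \<bar>real_of_rat a2\<bar> + \<bar>real_of_rat a3\<bar>"
  define C where "C = exp (2*pi*(A+K))"
  let ?g = "\<lambda>(v1::int, v2::int, v3::int). exp (- (real_of_int \<bar>v1\<bar> + real_of_int \<bar>v2\<bar> + real_of_int \<bar>v3\<bar>))"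
  have S: "(\<lambda>v. C * ?g v) summable_on UNIV"
    by (rule summable_on_cmult_right) (rule exp3_summ)
  show ?thesis
  proof (rule summable_on_comparison_test[OF S])
    fix v :: "int\<times>int\<times>int"
    obtain v1 v2 v3 where v: "v = (v1,v2,v3)" by (cases v)
    define x1 where "x1 = real_of_rat a1 + real_of_int v1"
    define x2 where "x2 = real_of_rat a2 + real_of_int v2"
    define x3 where "x3 = real_of_rat a3 + real_of_int v3"
    have xr: "xr \<alpha> v = (x1,x2,x3)" unfolding \<alpha> v x1_def x2_def x3_def by simp
    have E: "t * Qr (x1,x2,x3) + Br (x1,x2,x3) (y1,y2,y3) \<ge> (\<bar>x1\<bar> + \<bar>x2\<bar> + \<bar>x3\<bar>) - K"
      unfolding K_def by (rule expo_bound[OF t])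
    have "\<bar>x1\<bar> \<ge> \<bar>real_of_int v1\<bar> - \<bar>real_of_rat a1\<bar>" unfolding x1_def by linarith
    moreover have "\<bar>x2\<bar> \<ge> \<bar>real_of_int v2\<bar> - \<bar>real_of_rat a2\<bar>" unfolding x2_def by linarith
    moreover have "\<bar>x3\<bar> \<ge> \<bar>real_of_int v3\<bar> - \<bar>real_of_rat a3\<bar>" unfolding x3_def by linarith
    ultimately have E2: "t * Qr (x1,x2,x3) + Br (x1,x2,x3) (y1,y2,y3) \<ge> (\<bar>real_of_int v1\<bar> + \<bar>real_of_int v2\<bar> + \<bar>real_of_int v3\<bar>) - A - K"
      using E unfolding A_def by linarith
    define V where "V = \<bar>real_of_int v1\<bar> + \<bar>real_of_int v2\<bar> + \<bar>real_of_int v3\<bar>"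
    have V0: "V \<ge> 0" unfolding V_def by simp
    have "-2*pi*(t * Qr (x1,x2,x3) + Br (x1,x2,x3) (y1,y2,y3)) \<le> -2*pi*(V - A - K)"
      using E2 unfolding V_def by (intro mult_left_mono_neg) auto
    also have "\<dots> = 2*pi*(A+K) + (- (2*pi*V))" by (simp add: algebra_simps)
    also have "\<dots> \<le> 2*pi*(A+K) + (- V)"
    proof -
      have "1 * V \<le> (2*pi) * V" by (rule mult_right_mono) (use pi_gt3 V0 in auto)
      then show ?thesis by linarith
    qed
    finally have "exp (-2*pi*(t * Qr (x1,x2,x3) + Br (x1,x2,x3) (y1,y2,y3))) \<le> exp (2*pi*(A+K) + (- V))"
      by simp
    also have "\<dots> = C * ?g v" unfolding C_def V_def v by (simp add: exp_add)
    finally show "exp (-2*pi*(t * Qr (xr \<alpha> v) + Br (xr \<alpha> v) y)) \<le> C * ?g v"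
      unfolding xr y .
  qed simp
qed


lemma tm_abs_summable:
  assumes "Im \<tau> > 0"
  shows "(\<lambda>v. norm (tm \<alpha> \<beta> \<tau> z v)) summable_on UNIV"
  unfolding norm_tm using gauss_summable[OF assms] .

lemma tm_summable:
  assumes "Im \<tau> > 0"
  shows "tm \<alpha> \<beta> \<tau> z summable_on UNIV"
  using abs_summable_summable[OF tm_abs_summable[OF assms]] .

lemma exp_lin_to0:
  fixes \<delta> :: real assumes "\<delta> > 0"
  shows "((\<lambda>T. exp (- ((T - 1) * \<delta>)) * c) \<longlongrightarrow> 0) at_top"
  using assms by real_asymp

lemma tail_lim:
  fixes D :: "'a \<Rightarrow> real" and ch :: "'a \<Rightarrow> complex"
  assumes fin: "finite N" and N0: "\<And>v. v \<in> N \<Longrightarrow> D v = 0"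
    and gap: "\<And>v. v \<notin> N \<Longrightarrow> D v \<ge> \<delta>" and \<delta>: "\<delta> > 0"
    and bnd: "\<And>v. norm (ch v) \<le> 1" and S: "(\<lambda>v. exp (- D v)) summable_on UNIV"
  shows "((\<lambda>T. \<Sum>\<^sub>\<infinity>v. ch v * exp (-(T * D v))) \<longlongrightarrow> (\<Sum>v\<in>N. ch v)) at_top"
proof (rule LIM_zero_cancel, rule Lim_null_comparison)
  define Sc where "Sc = (\<Sum>\<^sub>\<infinity>v\<in>-N. exp (- D v))"
  have D0: "D v \<ge> 0" for v using N0 gap \<delta> by (cases "v \<in> N") force+
  show "((\<lambda>T. exp (- ((T - 1) * \<delta>)) * Sc) \<longlongrightarrow> 0) at_top"
    by (rule exp_lin_to0[OF \<delta>])
  show "\<forall>\<^sub>F T in at_top. norm ((\<Sum>\<^sub>\<infinity>v. ch v * exp (-(T * D v))) - (\<Sum>v\<in>N. ch v)) \<le> exp (- ((T - 1) * \<delta>)) * Sc"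
    unfolding eventually_at_top_linorder
  proof (intro exI allI impI)
    fix T :: real assume T: "T \<ge> 1"
    define f where "f v = ch v * exp (-(T * D v))" for v
    have nf: "norm (f v) \<le> exp (- D v)" for v
    proof -
      have "norm (f v) = norm (ch v) * exp (-(T * D v))" unfolding f_def by (simp add: norm_mult)
      also have "\<dots> \<le> 1 * exp (- D v)"
      proof (rule mult_mono)
        have "D v \<le> T * D v" using T D0[of v] by (simp add: mult_right_mono[of 1 T "D v", simplified])
        then show "exp (-(T * D v)) \<le> exp (- D v)" by simp
      qed (use bnd in auto)
      finally show ?thesis by simp
    qed
    have fa: "(\<lambda>v. norm (f v)) summable_on UNIV"
      by (rule summable_on_comparison_test[OF S]) (use nf in auto)
    have fs: "f summable_on A" for A
      using summable_on_subset_banach[OF abs_summable_summable[OF fa]] by auto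
    have fas: "(\<lambda>v. norm (f v)) summable_on A" for A
      using summable_on_subset_banach[OF fa] by auto
    have split: "(\<Sum>\<^sub>\<infinity>v. f v) = (\<Sum>\<^sub>\<infinity>v\<in>N. f v) + (\<Sum>\<^sub>\<infinity>v\<in>-N. f v)"
      using infsum_Un_disjoint[OF fs fs, of N "-N"] by (simp add: Un_def)
    have fN: "(\<Sum>\<^sub>\<infinity>v\<in>N. f v) = (\<Sum>v\<in>N. ch v)"
      using fin by (simp add: f_def N0)
    have "norm (\<Sum>\<^sub>\<infinity>v\<in>-N. f v) \<le> (\<Sum>\<^sub>\<infinity>v\<in>-N. norm (f v))"
      by (rule norm_infsum_bound) (rule fas)
    also have "\<dots> \<le> (\<Sum>\<^sub>\<infinity>v\<in>-N. exp (- ((T - 1) * \<delta>)) * exp (- D v))"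
    proof (rule infsum_mono)
      show "(\<lambda>v. norm (f v)) summable_on - N" by (rule fas)
      show "(\<lambda>v. exp (- ((T - 1) * \<delta>)) * exp (- D v)) summable_on - N"
        by (rule summable_on_cmult_right, rule summable_on_subset_banach[OF S]) auto
      fix v assume v: "v \<in> - N"
      have "norm (f v) \<le> exp (-(T * D v))" unfolding f_def using bnd[of v] by (simp add: norm_mult mult_left_le_one_le)
      also have "\<dots> = exp (- ((T - 1) * D v)) * exp (- D v)" by (simp add: exp_add[symmetric] algebra_simps)
      also have "\<dots> \<le> exp (- ((T - 1) * \<delta>)) * exp (- D v)"
      proof -
        have "(T - 1) * \<delta> \<le> (T - 1) * D v" using gap[of v] v T by (intro mult_left_mono) auto
        then show ?thesis by simp
      qed
      finally show "norm (f v) \<le> exp (- ((T - 1) * \<delta>)) * exp (- D v)" .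
    qed
    also have "\<dots> = exp (- ((T - 1) * \<delta>)) * Sc" unfolding Sc_def by (rule infsum_cmult_right')
    finally show "norm ((\<Sum>\<^sub>\<infinity>v. ch v * exp (-(T * D v))) - (\<Sum>v\<in>N. ch v)) \<le> exp (- ((T - 1) * \<delta>)) * Sc"
      using split fN unfolding f_def by simp
  qed
qed


fun zp :: "real\<times>real\<times>real \<Rightarrow> real \<Rightarrow> cvec3" where
  "zp (p1, p2, p3) T = (- (\<i> * of_real (T*p1)), - (\<i> * of_real (T*p2)), - (\<i> * of_real (T*p3)))"

fun sub3 :: "real\<times>real\<times>real \<Rightarrow> real\<times>real\<times>real \<Rightarrow> real\<times>real\<times>real" where
  "sub3 (x1, x2, x3) (p1, p2, p3) = (x1 - p1, x2 - p2, x3 - p3)"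

fun neg3 :: "real\<times>real\<times>real \<Rightarrow> real\<times>real\<times>real" where
  "neg3 (p1, p2, p3) = (- p1, - p2, - p3)"

lemma B_zp: "B (cplx x) (zp p T) = - (\<i> * of_real (T * Br x p))"
  by (cases x; cases p) (simp add: algebra_simps)

lemma Qr_sub: "Qr (sub3 x p) = Qr x - Br x p + Qr p"
  unfolding Qr_def by (cases x; cases p) (simp add: field_simps)

lemma Br_neg: "Br x (neg3 p) = - Br x p"
  by (cases x; cases p) (simp add: algebra_simps)

lemma e_imag: "e (\<i> * of_real r) = of_real (exp (-2*pi*r))"
proof -
  have "2 * of_real pi * \<i> * (\<i> * of_real r) = (of_real (-2*pi*r) :: complex)"
    by (simp add: algebra_simps)
  then show ?thesis unfolding e_def by (simp only: exp_of_real)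
qed

lemma tm_eval:
  "tm \<alpha> \<beta> (\<i> * of_real T) (zp p T) v =
     e (B (ofQ \<beta>) (ofZ v)) * of_real (exp (-2*pi*(T*(Qr (sub3 (xr \<alpha> v) p) - Qr p))))"
proof -
  have arg: "\<i> * of_real T * Q (cplx (xr \<alpha> v)) + B (cplx (xr \<alpha> v)) (zp p T)
        = \<i> * of_real (T * (Qr (sub3 (xr \<alpha> v) p) - Qr p))"
    unfolding Q_cplx B_zp by (simp add: Qr_sub algebra_simps)
  show ?thesis
    unfolding tm_def vadd_xr arg e_imag ..
qed

lemma norm_e_B: "norm (e (B (ofQ \<beta>) (ofZ v))) = 1"
  by (simp add: norm_e B_ofQ_ofZ_Im)

lemma theta_lim:
  fixes m :: real and N :: "(int\<times>int\<times>int) set"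
  assumes fin: "finite N" and N0: "\<And>v. v\<in>N \<Longrightarrow> Qr (sub3 (xr \<alpha> v) p) = m"
    and gap: "\<And>v. v \<notin> N \<Longrightarrow> Qr (sub3 (xr \<alpha> v) p) \<ge> m + 1/4"
  shows "((\<lambda>T. theta \<alpha> \<beta> (\<i> * of_real T) (zp p T) * of_real (exp (2*pi*T*(m - Qr p))))
           \<longlongrightarrow> (\<Sum>v\<in>N. e (B (ofQ \<beta>) (ofZ v)))) at_top"
proof -
  define D where "D v = 2*pi*(Qr (sub3 (xr \<alpha> v) p) - m)" for v
  define ch where "ch v = e (B (ofQ \<beta>) (ofZ v))" for v
  have eq: "theta \<alpha> \<beta> (\<i> * of_real T) (zp p T) * of_real (exp (2*pi*T*(m - Qr p)))
      = (\<Sum>\<^sub>\<infinity>v. ch v * exp (-(T * D v)))" for T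
  proof -
    have "theta \<alpha> \<beta> (\<i> * of_real T) (zp p T) * of_real (exp (2*pi*T*(m - Qr p)))
       = (\<Sum>\<^sub>\<infinity>v. tm \<alpha> \<beta> (\<i> * of_real T) (zp p T) v * of_real (exp (2*pi*T*(m - Qr p))))"
      unfolding theta_tm by (rule infsum_cmult_left'[symmetric])
    also have "\<dots> = (\<Sum>\<^sub>\<infinity>v. ch v * exp (-(T * D v)))"
    proof (rule infsum_cong)
      fix v
      have "exp (-2*pi*(T*(Qr (sub3 (xr \<alpha> v) p) - Qr p))) * exp (2*pi*T*(m - Qr p)) = exp (-(T * D v))"
        unfolding D_def by (simp add: exp_add[symmetric] algebra_simps)
      then show "tm \<alpha> \<beta> (\<i> * of_real T) (zp p T) v * of_real (exp (2*pi*T*(m - Qr p))) = ch v * exp (-(T * D v))"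
        unfolding tm_eval ch_def by (simp add: of_real_mult[symmetric] del: of_real_mult)
    qed
    finally show ?thesis .
  qed
  have S: "(\<lambda>v. exp (- D v)) summable_on UNIV"
  proof -
    have g: "(\<lambda>v. exp (2*pi*(m - Qr p)) * exp (-2*pi*(1 * Qr (xr \<alpha> v) + Br (xr \<alpha> v) (neg3 p)))) summable_on UNIV"
      by (rule summable_on_cmult_right) (rule gauss_summable, simp)
    have "exp (- D v) = exp (2*pi*(m - Qr p)) * exp (-2*pi*(1 * Qr (xr \<alpha> v) + Br (xr \<alpha> v) (neg3 p)))" for v
      unfolding D_def Qr_sub Br_neg by (simp add: exp_add[symmetric] algebra_simps)
    then show ?thesis using g by simp
  qed
  have lim: "((\<lambda>T. \<Sum>\<^sub>\<infinity>v. ch v * exp (-(T * D v))) \<longlongrightarrow> (\<Sum>v\<in>N. ch v)) at_top"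
  proof (rule tail_lim[OF fin _ _ _ _ S])
    show "D v = 0" if "v \<in> N" for v using N0[OF that] unfolding D_def by simp
    show "D v \<ge> pi/2" if "v \<notin> N" for v using gap[OF that] unfolding D_def by simp
    show "norm (ch v) \<le> 1" for v unfolding ch_def by (simp add: norm_e_B)
  qed simp
  show ?thesis unfolding eq using lim unfolding ch_def .
qed


lemma e_int: "e (of_int k) = 1"
  unfolding e_def by (subst exp_eq_1) (auto intro!: exI[of _ k])

lemma e_half: "e (1/2) = -1"
proof -
  have "2 * complex_of_real pi * \<i> * (1/2) = of_real pi * \<i>" by simp
  then show ?thesis unfolding e_def by simp
qed

lemma e_mhalf: "e (-1/2) = -1"
proof -
  have "2 * complex_of_real pi * \<i> * (-1/2) = - (of_real pi * \<i>)" by simp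
  then show ?thesis unfolding e_def by (simp add: exp_minus)
qed

lemma e_0: "e 0 = 1" unfolding e_def by simp
lemma e_1: "e 1 = 1" using e_int[of 1] by simp
lemma e_m1: "e (-1) = 1" using e_int[of "-1"] by simp

fun Qi :: "int\<times>int\<times>int \<Rightarrow> int" where
  "Qi (u1, u2, u3) = u1^2 + u2^2 + u3^2 - u1*u2 - u2*u3"

fun half :: "int\<times>int\<times>int \<Rightarrow> real\<times>real\<times>real" where
  "half (u1, u2, u3) = (of_int u1 / 2, of_int u2 / 2, of_int u3 / 2)"

fun uu :: "int\<times>int\<times>int \<Rightarrow> int\<times>int\<times>int \<Rightarrow> int\<times>int\<times>int" where
  "uu (c1, c2, c3) (v1, v2, v3) = (2 * v1 + c1, 2 * v2 + c2, 2 * v3 + c3)"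

lemma Qr_half: "Qr (half u) = of_int (Qi u) / 4"
  unfolding Qr_def by (cases u) (simp add: field_simps power2_eq_square)

lemma sq_small: "(x::int)^2 \<le> 2 \<Longrightarrow> x = -1 \<or> x = 0 \<or> x = 1"
proof -
  assume a: "x^2 \<le> 2"
  have "\<bar>x\<bar> < 2"
  proof (rule ccontr)
    assume "\<not> \<bar>x\<bar> < 2"
    then have "2 * 2 \<le> \<bar>x\<bar> * \<bar>x\<bar>" by (intro mult_mono) auto
    then show False using a by (simp add: power2_eq_square)
  qed
  then show ?thesis by auto
qed

lemma Qi_twice: "2 * Qi (u1,u2,u3) = (u1-u2)^2 + (u2-u3)^2 + u1^2 + u3^2"
  by (simp add: power2_eq_square algebra_simps)

lemma Qi_small:
  assumes "Qi u \<le> 1"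
  shows "u \<in> {(0,0,0),(1,0,0),(-1,0,0),(0,1,0),(0,-1,0),(0,0,1),(0,0,-1),(1,1,0),(-1,-1,0),(0,1,1),(0,-1,-1),(1,1,1),(-1,-1,-1)}"
proof -
  obtain u1 u2 u3 where u: "u = (u1,u2,u3)" by (cases u)
  have s: "(u1-u2)^2 + (u2-u3)^2 + u1^2 + u3^2 \<le> 2" using Qi_twice[of u1 u2 u3] assms u by simp
  have nn: "(u1-u2)^2 \<ge> 0" "(u2-u3)^2 \<ge> 0" "u1^2 \<ge> 0" "u3^2 \<ge> 0" by simp_all
  have "u1 = -1 \<or> u1 = 0 \<or> u1 = 1" by (rule sq_small) (use s nn in linarith)
  moreover have "u3 = -1 \<or> u3 = 0 \<or> u3 = 1" by (rule sq_small) (use s nn in linarith)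
  moreover have "u1 - u2 = -1 \<or> u1 - u2 = 0 \<or> u1 - u2 = 1" by (rule sq_small) (use s nn in linarith)
  ultimately have "u1 = -1 \<or> u1 = 0 \<or> u1 = 1" "u3 = -1 \<or> u3 = 0 \<or> u3 = 1"
     "u2 = -2 \<or> u2 = -1 \<or> u2 = 0 \<or> u2 = 1 \<or> u2 = 2" by arith+
  then show ?thesis using assms unfolding u by (elim disjE) (simp_all add: power2_eq_square)
qed

lemma Qi_zero:
  assumes "Qi u \<le> 0" shows "u = (0,0,0)"
  using Qi_small[of u] assms by (auto simp: power2_eq_square)

lemma lim_inst:
  fixes m4 :: int
  assumes sub: "\<And>v. sub3 (xr \<alpha> v) p = half (uu c v)"
    and fin: "finite N" and N0: "\<And>v. v \<in> N \<Longrightarrow> Qi (uu c v) = m4"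
    and gap: "\<And>v. v \<notin> N \<Longrightarrow> Qi (uu c v) \<ge> m4 + 1"
  shows "((\<lambda>T. theta \<alpha> \<beta> (\<i> * of_real T) (zp p T) * of_real (exp (2*pi*T*(of_int m4/4 - Qr p))))
           \<longlongrightarrow> (\<Sum>v\<in>N. e (B (ofQ \<beta>) (ofZ v)))) at_top"
proof (rule theta_lim[OF fin])
  show "Qr (sub3 (xr \<alpha> v) p) = of_int m4 / 4" if "v \<in> N" for v
    unfolding sub Qr_half N0[OF that] ..
  show "Qr (sub3 (xr \<alpha> v) p) \<ge> of_int m4 / 4 + 1/4" if "v \<notin> N" for v
  proof -
    have "real_of_int (m4 + 1) \<le> of_int (Qi (uu c v))" using gap[OF that] by linarith
    then show ?thesis unfolding sub Qr_half by simp
  qed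
qed


definition S13 :: "(int\<times>int\<times>int) set" where
  "S13 = {(0,0,0),(1,0,0),(-1,0,0),(0,1,0),(0,-1,0),(0,0,1),(0,0,-1),(1,1,0),(-1,-1,0),(0,1,1),(0,-1,-1),(1,1,1),(-1,-1,-1)}"

lemma inst0:
  assumes sub: "\<And>v. sub3 (xr \<alpha> v) p = half (uu c v)"
    and fin: "finite N" and N0: "\<And>v. v \<in> N \<Longrightarrow> Qi (uu c v) = 0"
    and Z: "\<And>v. uu c v = (0,0,0) \<Longrightarrow> v \<in> N"
  shows "((\<lambda>T. theta \<alpha> \<beta> (\<i> * of_real T) (zp p T) * of_real (exp (2*pi*T*(of_int 0/4 - Qr p))))
           \<longlongrightarrow> (\<Sum>v\<in>N. e (B (ofQ \<beta>) (ofZ v)))) at_top"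
proof (rule lim_inst[OF sub fin N0])
  fix v assume v: "v \<notin> N"
  show "Qi (uu c v) \<ge> 0 + 1"
  proof (rule ccontr)
    assume "\<not> Qi (uu c v) \<ge> 0 + 1"
    then have "uu c v = (0,0,0)" by (intro Qi_zero) simp
    then show False using Z v by blast
  qed
qed

lemma inst1:
  assumes sub: "\<And>v. sub3 (xr \<alpha> v) p = half (uu c v)"
    and fin: "finite N" and N0: "\<And>v. v \<in> N \<Longrightarrow> Qi (uu c v) = 1"
    and Z: "\<And>v. uu c v \<in> S13 \<Longrightarrow> v \<in> N"
  shows "((\<lambda>T. theta \<alpha> \<beta> (\<i> * of_real T) (zp p T) * of_real (exp (2*pi*T*(of_int 1/4 - Qr p))))
           \<longlongrightarrow> (\<Sum>v\<in>N. e (B (ofQ \<beta>) (ofZ v)))) at_top"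
proof (rule lim_inst[OF sub fin N0])
  fix v assume v: "v \<notin> N"
  show "Qi (uu c v) \<ge> 1 + 1"
  proof (rule ccontr)
    assume "\<not> Qi (uu c v) \<ge> 1 + 1"
    then have "uu c v \<in> S13" unfolding S13_def by (intro Qi_small) simp
    then show False using Z v by blast
  qed
qed

abbreviation "a0 \<equiv> ((0,0,0) :: rat\<times>rat\<times>rat)"
abbreviation "aa \<equiv> ((1/2,0,1/2) :: rat\<times>rat\<times>rat)"

lemma I00: "((\<lambda>T. theta a0 \<beta> (\<i> * of_real T) (zp (0,0,0) T) * of_real (exp (2*pi*T*(of_int 0/4 - Qr (0,0,0)))))
           \<longlongrightarrow> (\<Sum>v\<in>{(0,0,0)}. e (B (ofQ \<beta>) (ofZ v)))) at_top"
  apply (rule inst0[where c="(0,0,0)"]) apply (auto simp: of_rat_divide field_simps) apply (presburger+)? done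

lemma Ia0: "((\<lambda>T. theta aa \<beta> (\<i> * of_real T) (zp (0,0,0) T) * of_real (exp (2*pi*T*(of_int 0/4 - Qr (0,0,0)))))
           \<longlongrightarrow> (\<Sum>v\<in>{}. e (B (ofQ \<beta>) (ofZ v)))) at_top"
  apply (rule inst0[where c="(1,0,1)"]) apply (auto simp: of_rat_divide field_simps) apply (presburger+)? done

lemma I0a: "((\<lambda>T. theta a0 \<beta> (\<i> * of_real T) (zp (1/2,0,1/2) T) * of_real (exp (2*pi*T*(of_int 0/4 - Qr (1/2,0,1/2)))))
           \<longlongrightarrow> (\<Sum>v\<in>{}. e (B (ofQ \<beta>) (ofZ v)))) at_top"
  apply (rule inst0[where c="(-1,0,-1)"]) apply (auto simp: of_rat_divide field_simps) apply (presburger+)? done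

lemma Iaa: "((\<lambda>T. theta aa \<beta> (\<i> * of_real T) (zp (1/2,0,1/2) T) * of_real (exp (2*pi*T*(of_int 0/4 - Qr (1/2,0,1/2)))))
           \<longlongrightarrow> (\<Sum>v\<in>{(0,0,0)}. e (B (ofQ \<beta>) (ofZ v)))) at_top"
  apply (rule inst0[where c="(0,0,0)"]) apply (auto simp: of_rat_divide field_simps) apply (presburger+)? done

lemma I01: "((\<lambda>T. theta a0 \<beta> (\<i> * of_real T) (zp (1/2,0,0) T) * of_real (exp (2*pi*T*(of_int 1/4 - Qr (1/2,0,0)))))
           \<longlongrightarrow> (\<Sum>v\<in>{(0,0,0),(1,0,0)}. e (B (ofQ \<beta>) (ofZ v)))) at_top"
  apply (rule inst1[where c="(-1,0,0)"]) apply (auto simp: of_rat_divide field_simps S13_def) apply (presburger+)? done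

lemma Ia1: "((\<lambda>T. theta aa \<beta> (\<i> * of_real T) (zp (1/2,0,0) T) * of_real (exp (2*pi*T*(of_int 1/4 - Qr (1/2,0,0)))))
           \<longlongrightarrow> (\<Sum>v\<in>{(0,0,0),(0,0,-1)}. e (B (ofQ \<beta>) (ofZ v)))) at_top"
  apply (rule inst1[where c="(0,0,1)"]) apply (auto simp: of_rat_divide field_simps S13_def) apply (presburger+)? done

lemma I02: "((\<lambda>T. theta a0 \<beta> (\<i> * of_real T) (zp (0,1/2,0) T) * of_real (exp (2*pi*T*(of_int 1/4 - Qr (0,1/2,0)))))
           \<longlongrightarrow> (\<Sum>v\<in>{(0,0,0),(0,1,0)}. e (B (ofQ \<beta>) (ofZ v)))) at_top"
  apply (rule inst1[where c="(0,-1,0)"]) apply (auto simp: of_rat_divide field_simps S13_def) apply (presburger+)? done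

lemma Ia2: "((\<lambda>T. theta aa \<beta> (\<i> * of_real T) (zp (0,1/2,0) T) * of_real (exp (2*pi*T*(of_int 1/4 - Qr (0,1/2,0)))))
           \<longlongrightarrow> (\<Sum>v\<in>{(0,1,0),(-1,0,-1)}. e (B (ofQ \<beta>) (ofZ v)))) at_top"
  apply (rule inst1[where c="(1,-1,1)"]) apply (auto simp: of_rat_divide field_simps S13_def) apply (presburger+)? done

lemma I03: "((\<lambda>T. theta a0 \<beta> (\<i> * of_real T) (zp (1/2,1/2,0) T) * of_real (exp (2*pi*T*(of_int 1/4 - Qr (1/2,1/2,0)))))
           \<longlongrightarrow> (\<Sum>v\<in>{(0,0,0),(1,1,0)}. e (B (ofQ \<beta>) (ofZ v)))) at_top"
  apply (rule inst1[where c="(-1,-1,0)"]) apply (auto simp: of_rat_divide field_simps S13_def) apply (presburger+)? done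

lemma Ia3: "((\<lambda>T. theta aa \<beta> (\<i> * of_real T) (zp (1/2,1/2,0) T) * of_real (exp (2*pi*T*(of_int 1/4 - Qr (1/2,1/2,0)))))
           \<longlongrightarrow> (\<Sum>v\<in>{(0,1,0),(0,0,-1)}. e (B (ofQ \<beta>) (ofZ v)))) at_top"
  apply (rule inst1[where c="(0,-1,1)"]) apply (auto simp: of_rat_divide field_simps S13_def) apply (presburger+)? done


definition al :: "nat \<Rightarrow> rat\<times>rat\<times>rat" where
  "al i = (if i = 1 then (1/2,0,1/2) else (0,0,0))"
definition be :: "nat \<Rightarrow> rat\<times>rat\<times>rat" where
  "be i = (if i = 2 then (0,1/2,0) else if i = 3 then (1/2,0,0) else if i = 4 then (1/2,1/2,0) else (0,0,0))"

lemma F5_al_be: "i < 5 \<Longrightarrow> F5 i \<tau> z = theta (al i) (be i) \<tau> z ^ 2"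
  unfolding F5_def al_def be_def
  by (cases i; cases "i - 1"; cases "i - 2"; cases "i - 3"; cases "i - 4") (auto simp: numeral_eq_Suc)

lemma regime:
  fixes s :: "real \<Rightarrow> real" and Lm :: "nat \<Rightarrow> complex"
  assumes H: "\<forall>\<tau> z. Im \<tau> > 0 \<longrightarrow> (\<Sum>i<5. c i * F5 i \<tau> z) = 0"
    and L: "\<And>i. i < 5 \<Longrightarrow> ((\<lambda>T. theta (al i) (be i) (\<i> * of_real T) (zp p T) * of_real (s T)) \<longlongrightarrow> Lm i) at_top"
  shows "(\<Sum>i<5. c i * (Lm i)^2) = 0"
proof -
  have lim: "((\<lambda>T. \<Sum>i<5. c i * (theta (al i) (be i) (\<i> * of_real T) (zp p T) * of_real (s T))^2)
     \<longlongrightarrow> (\<Sum>i<5. c i * (Lm i)^2)) at_top"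
    by (intro tendsto_sum tendsto_mult_left tendsto_power L) simp
  have ev: "\<forall>\<^sub>F T in at_top. (\<Sum>i<5. c i * (theta (al i) (be i) (\<i> * of_real T) (zp p T) * of_real (s T))^2) = 0"
    unfolding eventually_at_top_linorder
  proof (intro exI allI impI)
    fix T :: real assume T: "T \<ge> 1"
    have "(\<Sum>i<5. c i * (theta (al i) (be i) (\<i> * of_real T) (zp p T) * of_real (s T))^2)
        = (of_real (s T))^2 * (\<Sum>i<5. c i * F5 i (\<i> * of_real T) (zp p T))"
      by (simp add: sum_distrib_left F5_al_be power_mult_distrib algebra_simps)
    also have "\<dots> = 0" using H[rule_format, of "\<i> * of_real T" "zp p T"] T by simp
    finally show "(\<Sum>i<5. c i * (theta (al i) (be i) (\<i> * of_real T) (zp p T) * of_real (s T))^2) = 0" .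
  qed
  have "((\<lambda>T::real. 0) \<longlongrightarrow> (\<Sum>i<5. c i * (Lm i)^2)) at_top"
    by (rule Lim_transform_eventually[OF lim ev])
  then have "0 = (\<Sum>i<5. c i * (Lm i)^2)"
    by (simp only: tendsto_const_iff[OF trivial_limit_at_top_linorder])
  then show ?thesis by simp
qed

lemma sum5: "(\<Sum>i<(5::nat). f i) = f 0 + f 1 + f 2 + f 3 + (f 4 :: complex)"
  by (simp add: numeral_eq_Suc)

lemma e_mhalf2: "e (- (1/2)) = -1" using e_mhalf by simp

lemma cases5: "i < 5 \<Longrightarrow> i = 0 \<or> i = 1 \<or> i = 2 \<or> i = 3 \<or> i = (4::nat)" by auto

lemma indep:
  assumes H: "\<forall>\<tau> z. Im \<tau> > 0 \<longrightarrow> (\<Sum>i<5. c i * F5 i \<tau> z) = 0"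
  shows "\<forall>i<5. c i = 0"
proof -
  define ev where "ev N \<beta> = (\<Sum>v\<in>N. e (B (ofQ \<beta>) (ofZ v)))" for N \<beta>
  have R0: "(\<Sum>i<5. c i * (if i = 1 then ev {} (be i) else ev {(0,0,0)} (be i))^2) = 0"
  proof (rule regime[OF H])
    fix i :: nat assume "i < 5"
    then show "((\<lambda>T. theta (al i) (be i) (\<i> * of_real T) (zp (0,0,0) T) * of_real (exp (2*pi*T*(of_int 0/4 - Qr (0,0,0)))))
        \<longlongrightarrow> (if i = 1 then ev {} (be i) else ev {(0,0,0)} (be i))) at_top"
      unfolding ev_def using I00 Ia0 by (auto simp: al_def)
  qed
  have R1: "(\<Sum>i<5. c i * (if i = 1 then ev {(0,0,0)} (be i) else ev {} (be i))^2) = 0"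
  proof (rule regime[OF H])
    fix i :: nat assume "i < 5"
    then show "((\<lambda>T. theta (al i) (be i) (\<i> * of_real T) (zp (1/2,0,1/2) T) * of_real (exp (2*pi*T*(of_int 0/4 - Qr (1/2,0,1/2)))))
        \<longlongrightarrow> (if i = 1 then ev {(0,0,0)} (be i) else ev {} (be i))) at_top"
      unfolding ev_def using I0a Iaa by (auto simp: al_def)
  qed
  have R2: "(\<Sum>i<5. c i * (if i = 1 then ev {(0,0,0),(0,0,-1)} (be i) else ev {(0,0,0),(1,0,0)} (be i))^2) = 0"
  proof (rule regime[OF H])
    fix i :: nat assume "i < 5"
    then show "((\<lambda>T. theta (al i) (be i) (\<i> * of_real T) (zp (1/2,0,0) T) * of_real (exp (2*pi*T*(of_int 1/4 - Qr (1/2,0,0)))))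
        \<longlongrightarrow> (if i = 1 then ev {(0,0,0),(0,0,-1)} (be i) else ev {(0,0,0),(1,0,0)} (be i))) at_top"
      unfolding ev_def using I01 Ia1 by (auto simp: al_def)
  qed
  have R3: "(\<Sum>i<5. c i * (if i = 1 then ev {(0,1,0),(-1,0,-1)} (be i) else ev {(0,0,0),(0,1,0)} (be i))^2) = 0"
  proof (rule regime[OF H])
    fix i :: nat assume "i < 5"
    then show "((\<lambda>T. theta (al i) (be i) (\<i> * of_real T) (zp (0,1/2,0) T) * of_real (exp (2*pi*T*(of_int 1/4 - Qr (0,1/2,0)))))
        \<longlongrightarrow> (if i = 1 then ev {(0,1,0),(-1,0,-1)} (be i) else ev {(0,0,0),(0,1,0)} (be i))) at_top"
      unfolding ev_def using I02 Ia2 by (auto simp: al_def)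
  qed
  have R4: "(\<Sum>i<5. c i * (if i = 1 then ev {(0,1,0),(0,0,-1)} (be i) else ev {(0,0,0),(1,1,0)} (be i))^2) = 0"
  proof (rule regime[OF H])
    fix i :: nat assume "i < 5"
    then show "((\<lambda>T. theta (al i) (be i) (\<i> * of_real T) (zp (1/2,1/2,0) T) * of_real (exp (2*pi*T*(of_int 1/4 - Qr (1/2,1/2,0)))))
        \<longlongrightarrow> (if i = 1 then ev {(0,1,0),(0,0,-1)} (be i) else ev {(0,0,0),(1,1,0)} (be i))) at_top"
      unfolding ev_def using I03 Ia3 by (auto simp: al_def)
  qed
  note ss = sum5 ev_def be_def of_rat_divide e_0 e_half e_1 e_m1 e_mhalf e_mhalf2
  have E0: "c 0 + c 2 + c 3 + c 4 = 0" using R0 by (simp add: ss)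
  have E1: "c 1 = 0" using R1 by (simp add: ss)
  have E2: "4 * c 0 + 4 * c 1 + 4 * c 3 = 0" using R2 by (simp add: ss algebra_simps)
  have E3: "4 * c 0 + 4 * c 1 + 4 * c 2 = 0" using R3 by (simp add: ss algebra_simps)
  have E4: "4 * c 0 + 4 * c 1 + 4 * c 4 = 0" using R4 by (simp add: ss algebra_simps)
  have c3: "c 3 = - c 0" using E2 E1 by (simp add: add_eq_0_iff)
  have c2: "c 2 = - c 0" using E3 E1 by (simp add: add_eq_0_iff)
  have c4: "c 4 = - c 0" using E4 E1 by (simp add: add_eq_0_iff)
  have c0: "c 0 = 0" using E0 c2 c3 c4 by simp
  show ?thesis using c0 E1 c2 c3 c4 cases5 by auto
qed


lemma infsum_diff':
  fixes F G :: "'a \<Rightarrow> complex"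
  assumes "F summable_on A" "G summable_on A"
  shows "infsum (\<lambda>x. F x - G x) A = infsum F A - infsum G A"
proof -
  have "(\<lambda>x. - G x) summable_on A" using assms(2) by (simp add: summable_on_uminus)
  then have "infsum (\<lambda>x. F x + - G x) A = infsum F A + infsum (\<lambda>x. - G x) A"
    by (rule infsum_add[OF assms(1)])
  then show ?thesis by (simp add: infsum_uminus)
qed

lemma sq_infsum:
  fixes f :: "'a::countable \<Rightarrow> complex"
  assumes a: "(\<lambda>v. norm (f v)) summable_on UNIV"
  shows "(\<lambda>(v,w). f v * f w) summable_on UNIV"
    and "(infsum f UNIV)^2 = infsum (\<lambda>(v,w). f v * f w) UNIV"
proof -
  have "(\<lambda>(x,y). norm (f x) * norm (f y)) summable_on UNIV"
    by (rule prod_summ) (use a in auto)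
  moreover have "(\<lambda>(x,y). norm (f x) * norm (f y)) = (\<lambda>p. norm ((\<lambda>(v,w). f v * f w) p))"
    by (auto simp: norm_mult)
  ultimately have ab: "(\<lambda>p. norm ((\<lambda>(v,w). f v * f w) p)) summable_on UNIV" by simp
  then show s: "(\<lambda>(v,w). f v * f w) summable_on UNIV" by (rule abs_summable_summable)
  have s': "(\<lambda>(v,w). f v * f w) summable_on Sigma UNIV (\<lambda>_. UNIV)" using s by simp
  have "infsum (\<lambda>(v,w). f v * f w) (Sigma UNIV (\<lambda>_. UNIV))
      = infsum (\<lambda>x. infsum (\<lambda>y. (\<lambda>(v,w). f v * f w) (x,y)) UNIV) UNIV"
    by (rule infsum_Sigma_banach[OF s', symmetric])
  also have "\<dots> = infsum (\<lambda>x. f x * infsum f UNIV) UNIV"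
    by (simp add: infsum_cmult_right')
  also have "\<dots> = infsum f UNIV * infsum f UNIV"
    by (rule infsum_cmult_left')
  finally show "(infsum f UNIV)^2 = infsum (\<lambda>(v,w). f v * f w) UNIV"
    by (simp add: power2_eq_square)
qed

definition gg :: "rat\<times>rat\<times>rat \<Rightarrow> complex \<Rightarrow> cvec3 \<Rightarrow> int\<times>int\<times>int \<Rightarrow> complex" where
  "gg \<alpha> \<tau> z v = e (\<tau> * Q (vadd (ofQ \<alpha>) (ofZ v)) + B (vadd (ofQ \<alpha>) (ofZ v)) z)"

definition chi :: "rat\<times>rat\<times>rat \<Rightarrow> int\<times>int\<times>int \<Rightarrow> complex" where
  "chi \<beta> v = e (B (ofQ \<beta>) (ofZ v))"

lemma tm_gg: "tm \<alpha> \<beta> \<tau> z v = chi \<beta> v * gg \<alpha> \<tau> z v"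
  unfolding tm_def gg_def chi_def ..

lemma chi0: "chi (0,0,0) v = 1"
  unfolding chi_def by (cases v) (simp add: e_0)

lemma theta_sq_diff:
  assumes "Im \<tau> > 0"
  shows "theta \<alpha> \<beta> \<tau> z ^2 - theta \<alpha> (0,0,0) \<tau> z ^2
    = infsum (\<lambda>(v,w). (chi \<beta> v * chi \<beta> w - 1) * (gg \<alpha> \<tau> z v * gg \<alpha> \<tau> z w)) UNIV"
proof -
  have "theta \<alpha> \<beta> \<tau> z ^2 - theta \<alpha> (0,0,0) \<tau> z ^2
     = infsum (\<lambda>(v,w). tm \<alpha> \<beta> \<tau> z v * tm \<alpha> \<beta> \<tau> z w) UNIV - infsum (\<lambda>(v,w). tm \<alpha> (0,0,0) \<tau> z v * tm \<alpha> (0,0,0) \<tau> z w) UNIV"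
    unfolding theta_tm by (simp add: sq_infsum(2)[OF tm_abs_summable[OF assms]])
  also have "\<dots> = infsum (\<lambda>p. (\<lambda>(v,w). tm \<alpha> \<beta> \<tau> z v * tm \<alpha> \<beta> \<tau> z w) p - (\<lambda>(v,w). tm \<alpha> (0,0,0) \<tau> z v * tm \<alpha> (0,0,0) \<tau> z w) p) UNIV"
    by (rule infsum_diff'[symmetric]) (rule sq_infsum(1)[OF tm_abs_summable[OF assms]])+
  also have "\<dots> = infsum (\<lambda>(v,w). (chi \<beta> v * chi \<beta> w - 1) * (gg \<alpha> \<tau> z v * gg \<alpha> \<tau> z w)) UNIV"
    by (rule infsum_cong) (auto simp: tm_gg chi0 algebra_simps)
  finally show ?thesis .
qed


definition Pset :: "((int\<times>int\<times>int)\<times>(int\<times>int\<times>int)) set" where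
  "Pset = {((v1,v2,v3),(w1,w2,w3)). odd (v2+w2) \<or> odd (v1+w1+v3+w3)}"

fun psi :: "(int\<times>int\<times>int)\<times>(int\<times>int\<times>int) \<Rightarrow> (int\<times>int\<times>int)\<times>(int\<times>int\<times>int)" where
  "psi ((v1,v2,v3),(w1,w2,w3)) = (if odd (v1+w1+v3+w3)
     then (let k = (v1+w1+v3+w3-1) div 2 in ((k-w3, v2, k-w1),(k-v3, w2, k-v1)))
     else (let k = (v2+w2-1) div 2 in ((w1+k-w2, v2, w3+k-w2),(v1-k+w2-1, w2, v3-k+w2-1))))"

fun psi_inv :: "(int\<times>int\<times>int)\<times>(int\<times>int\<times>int) \<Rightarrow> (int\<times>int\<times>int)\<times>(int\<times>int\<times>int)" where
  "psi_inv ((a1,a2,a3),(b1,b2,b3)) = (if odd (a1+b1+a3+b3)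
     then (let k = (a1+b1+a3+b3+1) div 2 in ((k-b3, a2, k-b1),(k-a3, b2, k-a1)))
     else (let k = (a2+b2-1) div 2 in ((b1+k-b2+1, a2, b3+k-b2+1),(a1-k+b2, b2, a3-k+b2))))"

lemma Pset_iff: "((v1,v2,v3),(w1,w2,w3)) \<in> Pset \<longleftrightarrow> odd (v2+w2) \<or> odd (v1+w1+v3+w3)"
  by (simp add: Pset_def)

lemma odd_half: "odd (n::int) \<Longrightarrow> 2 * ((n - 1) div 2) = n - 1" by presburger

lemma psi_A:
  assumes "odd (v1+w1+v3+w3)"
  shows "\<exists>k. 2*k = v1+w1+v3+w3-1 \<and> psi ((v1,v2,v3),(w1,w2,w3)) = ((k-w3, v2, k-w1),(k-v3, w2, k-v1))"
  using assms odd_half[OF assms] by (auto simp: Let_def)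

lemma psi_B:
  assumes "even (v1+w1+v3+w3)" "odd (v2+w2)"
  shows "\<exists>k. 2*k = v2+w2-1 \<and> psi ((v1,v2,v3),(w1,w2,w3)) = ((w1+k-w2, v2, w3+k-w2),(v1-k+w2-1, w2, v3-k+w2-1))"
  using assms odd_half[OF assms(2)] by (auto simp: Let_def)

lemma psi_inv_A:
  assumes "2*k = v1+w1+v3+w3-1"
  shows "psi_inv ((k-w3, v2, k-w1),(k-v3, w2, k-v1)) = ((v1,v2,v3),(w1,w2,w3))"
proof -
  have e: "k-w3+(k-v3)+(k-w1)+(k-v1) = 2*k - 1" using assms by linarith
  have o: "odd (k-w3+(k-v3)+(k-w1)+(k-v1))" unfolding e by presburger
  have d: "(k-w3+(k-v3)+(k-w1)+(k-v1)+1) div 2 = k" unfolding e by simp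
  show ?thesis by (simp only: psi_inv.simps o d if_True Let_def) simp
qed

lemma psi_inv_B:
  assumes "2*k = v2+w2-1" "even (v1+w1+v3+w3)"
  shows "psi_inv ((w1+k-w2, v2, w3+k-w2),(v1-k+w2-1, w2, v3-k+w2-1)) = ((v1,v2,v3),(w1,w2,w3))"
proof -
  have e: "w1+k-w2+(v1-k+w2-1)+(w3+k-w2)+(v3-k+w2-1) = (v1+w1+v3+w3) - 2" by linarith
  have o: "\<not> odd (w1+k-w2+(v1-k+w2-1)+(w3+k-w2)+(v3-k+w2-1))" unfolding e using assms(2) by presburger
  have d: "(v2+w2-1) div 2 = k" using assms(1) by linarith
  show ?thesis by (simp only: psi_inv.simps o d if_False Let_def) simp
qed

lemma psi_P: "p \<in> Pset \<Longrightarrow> psi p \<in> Pset"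
proof -
  assume p: "p \<in> Pset"
  obtain v1 v2 v3 w1 w2 w3 where pe: "p = ((v1,v2,v3),(w1,w2,w3))" by (cases p) auto
  show ?thesis
  proof (cases "odd (v1+w1+v3+w3)")
    case True
    then obtain k where k: "2*k = v1+w1+v3+w3-1" and ps: "psi p = ((k-w3, v2, k-w1),(k-v3, w2, k-v1))"
      using psi_A unfolding pe by blast
    have "k-w3+(k-v3)+(k-w1)+(k-v1) = 2*k - 1" using k by linarith
    then have "odd (k-w3+(k-v3)+(k-w1)+(k-v1))" by presburger
    then show ?thesis unfolding ps Pset_iff by blast
  next
    case False
    then have o2: "odd (v2+w2)" using p unfolding pe Pset_iff by blast
    then obtain k where k: "2*k = v2+w2-1" and ps: "psi p = ((w1+k-w2, v2, w3+k-w2),(v1-k+w2-1, w2, v3-k+w2-1))"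
      using psi_B False unfolding pe by blast
    show ?thesis unfolding ps Pset_iff using o2 by blast
  qed
qed

lemma psi_inv_psi: "p \<in> Pset \<Longrightarrow> psi_inv (psi p) = p"
proof -
  assume p: "p \<in> Pset"
  obtain v1 v2 v3 w1 w2 w3 where pe: "p = ((v1,v2,v3),(w1,w2,w3))" by (cases p) auto
  show ?thesis
  proof (cases "odd (v1+w1+v3+w3)")
    case True
    then obtain k where k: "2*k = v1+w1+v3+w3-1" and ps: "psi p = ((k-w3, v2, k-w1),(k-v3, w2, k-v1))"
      using psi_A unfolding pe by blast
    show ?thesis using psi_inv_A[OF k] ps pe by simp
  next
    case False
    then have o2: "odd (v2+w2)" using p unfolding pe Pset_iff by blast
    then obtain k where k: "2*k = v2+w2-1" and ps: "psi p = ((w1+k-w2, v2, w3+k-w2),(v1-k+w2-1, w2, v3-k+w2-1))"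
      using psi_B False unfolding pe by blast
    show ?thesis using psi_inv_B[OF k] False ps pe by simp
  qed
qed

lemma odd_half2: "odd (n::int) \<Longrightarrow> 2 * ((n + 1) div 2) = n + 1" by presburger

lemma psiinv_A:
  assumes "odd (a1+b1+a3+b3)"
  shows "\<exists>k. 2*k = a1+b1+a3+b3+1 \<and> psi_inv ((a1,a2,a3),(b1,b2,b3)) = ((k-b3, a2, k-b1),(k-a3, b2, k-a1))"
  using assms odd_half2[OF assms] by (auto simp: Let_def)

lemma psiinv_B:
  assumes "even (a1+b1+a3+b3)" "odd (a2+b2)"
  shows "\<exists>k. 2*k = a2+b2-1 \<and> psi_inv ((a1,a2,a3),(b1,b2,b3)) = ((b1+k-b2+1, a2, b3+k-b2+1),(a1-k+b2, b2, a3-k+b2))"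
  using assms odd_half[OF assms(2)] by (auto simp: Let_def)

lemma psi_of_A:
  assumes "2*k = a1+b1+a3+b3+1"
  shows "psi ((k-b3, a2, k-b1),(k-a3, b2, k-a1)) = ((a1,a2,a3),(b1,b2,b3))"
proof -
  have e: "k-b3+(k-a3)+(k-b1)+(k-a1) = 2*k + 1" using assms by linarith
  have o: "odd (k-b3+(k-a3)+(k-b1)+(k-a1))" unfolding e by presburger
  have d: "(k-b3+(k-a3)+(k-b1)+(k-a1)-1) div 2 = k" unfolding e by simp
  show ?thesis by (simp only: psi.simps o d if_True Let_def) simp
qed

lemma psi_of_B:
  assumes "2*k = a2+b2-1" "even (a1+b1+a3+b3)"
  shows "psi ((b1+k-b2+1, a2, b3+k-b2+1),(a1-k+b2, b2, a3-k+b2)) = ((a1,a2,a3),(b1,b2,b3))"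
proof -
  have e: "b1+k-b2+1+(a1-k+b2)+(b3+k-b2+1)+(a3-k+b2) = (a1+b1+a3+b3) + 2" by linarith
  have o: "\<not> odd (b1+k-b2+1+(a1-k+b2)+(b3+k-b2+1)+(a3-k+b2))" unfolding e using assms(2) by presburger
  have d: "(a2+b2-1) div 2 = k" using assms(1) by linarith
  show ?thesis by (simp only: psi.simps o d if_False Let_def) simp
qed

lemma psi_inv_P: "p \<in> Pset \<Longrightarrow> psi_inv p \<in> Pset"
proof -
  assume p: "p \<in> Pset"
  obtain a1 a2 a3 b1 b2 b3 where pe: "p = ((a1,a2,a3),(b1,b2,b3))" by (cases p) auto
  show ?thesis
  proof (cases "odd (a1+b1+a3+b3)")
    case True
    then obtain k where k: "2*k = a1+b1+a3+b3+1" and ps: "psi_inv p = ((k-b3, a2, k-b1),(k-a3, b2, k-a1))"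
      using psiinv_A unfolding pe by blast
    have "k-b3+(k-a3)+(k-b1)+(k-a1) = 2*k + 1" using k by linarith
    then have "odd (k-b3+(k-a3)+(k-b1)+(k-a1))" by presburger
    then show ?thesis unfolding ps Pset_iff by blast
  next
    case False
    then have o2: "odd (a2+b2)" using p unfolding pe Pset_iff by blast
    then obtain k where k: "2*k = a2+b2-1" and ps: "psi_inv p = ((b1+k-b2+1, a2, b3+k-b2+1),(a1-k+b2, b2, a3-k+b2))"
      using psiinv_B False unfolding pe by blast
    show ?thesis unfolding ps Pset_iff using o2 by blast
  qed
qed

lemma psi_psi_inv: "p \<in> Pset \<Longrightarrow> psi (psi_inv p) = p"
proof -
  assume p: "p \<in> Pset"
  obtain a1 a2 a3 b1 b2 b3 where pe: "p = ((a1,a2,a3),(b1,b2,b3))" by (cases p) auto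
  show ?thesis
  proof (cases "odd (a1+b1+a3+b3)")
    case True
    then obtain k where k: "2*k = a1+b1+a3+b3+1" and ps: "psi_inv p = ((k-b3, a2, k-b1),(k-a3, b2, k-a1))"
      using psiinv_A unfolding pe by blast
    show ?thesis using psi_of_A[OF k] ps pe by simp
  next
    case False
    then have o2: "odd (a2+b2)" using p unfolding pe Pset_iff by blast
    then obtain k where k: "2*k = a2+b2-1" and ps: "psi_inv p = ((b1+k-b2+1, a2, b3+k-b2+1),(a1-k+b2, b2, a3-k+b2))"
      using psiinv_B False unfolding pe by blast
    show ?thesis using psi_of_B[OF k] False ps pe by simp
  qed
qed


lemma e_add: "e (x + y) = e x * e y"
  unfolding e_def by (simp add: distrib_left exp_add)

lemma Q_half3: "Q (a/2, b/2, c/2) = Q (a,b,c) / 4"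
  unfolding Q_def by (simp add: field_simps)

lemma B_half3: "B (a/2, b/2, c/2) z = B (a,b,c) z / 2"
  by (cases z) (simp add: field_simps)

lemma PA0: fixes V1 V2 V3 W1 W2 W3 :: complex
  shows "B (V1+W1+V3-W3, 2*V2, V1-W1+V3+W3) (V1+W1+V3-W3, 2*V2, V1-W1+V3+W3) + B (V1+W1-V3+W3, 2*W2, -V1+W1+V3+W3) (V1+W1-V3+W3, 2*W2, -V1+W1+V3+W3) = 4 * (B (V1,V2,V3) (V1,V2,V3) + B (W1,W2,W3) (W1,W2,W3))"
  by (simp add: algebra_simps)

lemma PA1: fixes V1 V2 V3 W1 W2 W3 :: complex
  shows "Q (V1+W1+V3-W3, 2*V2, V1-W1+V3+W3) + Q (V1+W1-V3+W3, 2*W2, -V1+W1+V3+W3) = 4 * (Q (V1,V2,V3) + Q (W1,W2,W3))"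
  using PA0[of V1 W1 V3 W3 V2 W2] unfolding Q_def by (simp add: field_simps del: B.simps)

lemma PB0: fixes V1 V2 V3 W1 W2 W3 :: complex
  shows "B (2*W1+V2-W2, 2*V2, 2*W3+V2-W2) (2*W1+V2-W2, 2*V2, 2*W3+V2-W2) + B (2*V1-V2+W2, 2*W2, 2*V3-V2+W2) (2*V1-V2+W2, 2*W2, 2*V3-V2+W2) = 4 * (B (V1,V2,V3) (V1,V2,V3) + B (W1,W2,W3) (W1,W2,W3))"
  by (simp add: algebra_simps)

lemma PB1: fixes V1 V2 V3 W1 W2 W3 :: complex
  shows "Q (2*W1+V2-W2, 2*V2, 2*W3+V2-W2) + Q (2*V1-V2+W2, 2*W2, 2*V3-V2+W2) = 4 * (Q (V1,V2,V3) + Q (W1,W2,W3))"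
  using PB0[of W1 V2 W2 W3 V1 V3] unfolding Q_def by (simp add: field_simps del: B.simps)

lemma Blin2: "B (a1,a2,a3) z + B (b1,b2,b3) z = B (a1+b1, a2+b2, a3+b3) z"
  by (cases z) (simp add: algebra_simps)

lemma Bscale2: "B (2*a1, 2*a2, 2*a3) z = 2 * B (a1,a2,a3) z"
  by (cases z) (simp add: algebra_simps)

lemma combine:
  fixes t QX QY BX BY Qv Qw Bv Bw :: complex
  assumes "QX + QY = 4 * (Qv + Qw)" "BX + BY = 2 * (Bv + Bw)"
  shows "t * (QX/4) + BX/2 + (t * (QY/4) + BY/2) = t * Qv + Bv + (t * Qw + Bw)"
proof -
  have "t * (QX/4) + BX/2 + (t * (QY/4) + BY/2) = t * ((QX + QY)/4) + (BX + BY)/2"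
    by (simp add: field_simps)
  also have "\<dots> = t * Qv + Bv + (t * Qw + Bw)" unfolding assms by (simp add: field_simps)
  finally show ?thesis .
qed

lemma gg_A:
  assumes k: "2*k = v1+w1+v3+w3-1"
  shows "gg (1/2,0,1/2) \<tau> z (k-w3, v2, k-w1) * gg (1/2,0,1/2) \<tau> z (k-v3, w2, k-v1)
       = gg (0,0,0) \<tau> z (v1,v2,v3) * gg (0,0,0) \<tau> z (w1,w2,w3)"
proof -
  define V1 V2 V3 W1 W2 W3 where "V1 = (of_int v1::complex)" "V2 = (of_int v2::complex)" "V3 = (of_int v3::complex)"
     "W1 = (of_int w1::complex)" "W2 = (of_int w2::complex)" "W3 = (of_int w3::complex)"
  have h: "V1 + W1 + V3 + W3 - 1 = 2 * (of_int k :: complex)"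
    using arg_cong[OF k, of "of_int :: int \<Rightarrow> complex"] unfolding V1_V2_V3_W1_W2_W3_def by simp
  have K: "(of_int k :: complex) = (V1 + W1 + V3 + W3 - 1)/2"
    unfolding h by simp
  have x: "vadd (ofQ (1/2,0,1/2)) (ofZ (k-w3, v2, k-w1)) = ((V1+W1+V3-W3)/2, (2*V2)/2, (V1-W1+V3+W3)/2)"
    unfolding V1_V2_V3_W1_W2_W3_def by (simp add: of_rat_divide K V1_V2_V3_W1_W2_W3_def field_simps)
  have y: "vadd (ofQ (1/2,0,1/2)) (ofZ (k-v3, w2, k-v1)) = ((V1+W1-V3+W3)/2, (2*W2)/2, (-V1+W1+V3+W3)/2)"
    unfolding V1_V2_V3_W1_W2_W3_def by (simp add: of_rat_divide K V1_V2_V3_W1_W2_W3_def field_simps)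
  have v: "vadd (ofQ (0,0,0)) (ofZ (v1,v2,v3)) = (V1,V2,V3)" unfolding V1_V2_V3_W1_W2_W3_def by simp
  have w: "vadd (ofQ (0,0,0)) (ofZ (w1,w2,w3)) = (W1,W2,W3)" unfolding V1_V2_V3_W1_W2_W3_def by simp
  have P2: "B (V1+W1+V3-W3, 2*V2, V1-W1+V3+W3) z + B (V1+W1-V3+W3, 2*W2, -V1+W1+V3+W3) z
      = 2 * (B (V1,V2,V3) z + B (W1,W2,W3) z)"
    unfolding Blin2 Bscale2[symmetric] by (simp add: algebra_simps)
  show ?thesis unfolding gg_def e_add[symmetric] x y v w Q_half3 B_half3
    by (rule arg_cong[where f=e], rule combine[OF PA1 P2])
qed

lemma gg_B:
  assumes k: "2*k = v2+w2-1"
  shows "gg (1/2,0,1/2) \<tau> z (w1+k-w2, v2, w3+k-w2) * gg (1/2,0,1/2) \<tau> z (v1-k+w2-1, w2, v3-k+w2-1)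
       = gg (0,0,0) \<tau> z (v1,v2,v3) * gg (0,0,0) \<tau> z (w1,w2,w3)"
proof -
  define V1 V2 V3 W1 W2 W3 where "V1 = (of_int v1::complex)" "V2 = (of_int v2::complex)" "V3 = (of_int v3::complex)"
     "W1 = (of_int w1::complex)" "W2 = (of_int w2::complex)" "W3 = (of_int w3::complex)"
  have h: "V2 + W2 - 1 = 2 * (of_int k :: complex)"
    using arg_cong[OF k, of "of_int :: int \<Rightarrow> complex"] unfolding V1_V2_V3_W1_W2_W3_def by simp
  have K: "(of_int k :: complex) = (V2 + W2 - 1)/2"
    unfolding h by simp
  have x: "vadd (ofQ (1/2,0,1/2)) (ofZ (w1+k-w2, v2, w3+k-w2)) = ((2*W1+V2-W2)/2, (2*V2)/2, (2*W3+V2-W2)/2)"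
    unfolding V1_V2_V3_W1_W2_W3_def by (simp add: of_rat_divide K V1_V2_V3_W1_W2_W3_def field_simps)
  have y: "vadd (ofQ (1/2,0,1/2)) (ofZ (v1-k+w2-1, w2, v3-k+w2-1)) = ((2*V1-V2+W2)/2, (2*W2)/2, (2*V3-V2+W2)/2)"
    unfolding V1_V2_V3_W1_W2_W3_def by (simp add: of_rat_divide K V1_V2_V3_W1_W2_W3_def field_simps)
  have v: "vadd (ofQ (0,0,0)) (ofZ (v1,v2,v3)) = (V1,V2,V3)" unfolding V1_V2_V3_W1_W2_W3_def by simp
  have w: "vadd (ofQ (0,0,0)) (ofZ (w1,w2,w3)) = (W1,W2,W3)" unfolding V1_V2_V3_W1_W2_W3_def by simp
  have P2: "B (2*W1+V2-W2, 2*V2, 2*W3+V2-W2) z + B (2*V1-V2+W2, 2*W2, 2*V3-V2+W2) z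
      = 2 * (B (V1,V2,V3) z + B (W1,W2,W3) z)"
    unfolding Blin2 Bscale2[symmetric] by (simp add: algebra_simps)
  show ?thesis unfolding gg_def e_add[symmetric] x y v w Q_half3 B_half3
    by (rule arg_cong[where f=e], rule combine[OF PB1 P2])
qed

lemma Blin2': "B z (a1,a2,a3) + B z (b1,b2,b3) = B z (a1+b1, a2+b2, a3+b3)"
  by (cases z) (simp add: algebra_simps)

lemma e_B101: "\<beta> \<in> setB \<Longrightarrow> e (- B (ofQ \<beta>) (1,0,1)) = 1"
  unfolding setB_def by (auto simp: of_rat_divide e_0 e_1 e_m1)

lemma chi_shift:
  assumes "a1+b1 = v1+w1-1" "a2+b2 = v2+w2" "a3+b3 = v3+w3-1" and \<beta>: "\<beta> \<in> setB"
  shows "chi \<beta> (a1,a2,a3) * chi \<beta> (b1,b2,b3) = chi \<beta> (v1,v2,v3) * chi \<beta> (w1,w2,w3)"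
proof -
  have c1: "(of_int a1 :: complex) + of_int b1 = of_int v1 + of_int w1 - 1"
    using arg_cong[OF assms(1), of "of_int :: int \<Rightarrow> complex"] by simp
  have c2: "(of_int a2 :: complex) + of_int b2 = of_int v2 + of_int w2"
    using arg_cong[OF assms(2), of "of_int :: int \<Rightarrow> complex"] by simp
  have c3: "(of_int a3 :: complex) + of_int b3 = of_int v3 + of_int w3 - 1"
    using arg_cong[OF assms(3), of "of_int :: int \<Rightarrow> complex"] by simp
  have "B (ofQ \<beta>) (ofZ (a1,a2,a3)) + B (ofQ \<beta>) (ofZ (b1,b2,b3))
      = B (ofQ \<beta>) (ofZ (v1,v2,v3)) + B (ofQ \<beta>) (ofZ (w1,w2,w3)) + (- B (ofQ \<beta>) (1,0,1))"
  proof -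
    have "B (ofQ \<beta>) (ofZ (a1,a2,a3)) + B (ofQ \<beta>) (ofZ (b1,b2,b3))
        = B (ofQ \<beta>) (of_int v1 + of_int w1 - 1, of_int v2 + of_int w2, of_int v3 + of_int w3 - 1)"
      by (simp only: ofZ.simps Blin2' c1 c2 c3)
    also have "\<dots> = B (ofQ \<beta>) (ofZ (v1,v2,v3)) + B (ofQ \<beta>) (ofZ (w1,w2,w3)) + (- B (ofQ \<beta>) (1,0,1))"
      by (cases "ofQ \<beta>") (simp add: algebra_simps)
    finally show ?thesis .
  qed
  note eq = this
  have "chi \<beta> (a1,a2,a3) * chi \<beta> (b1,b2,b3) = e (B (ofQ \<beta>) (ofZ (a1,a2,a3)) + B (ofQ \<beta>) (ofZ (b1,b2,b3)))"
    unfolding chi_def e_add ..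
  also have "\<dots> = e ((B (ofQ \<beta>) (ofZ (v1,v2,v3)) + B (ofQ \<beta>) (ofZ (w1,w2,w3))) + (- B (ofQ \<beta>) (1,0,1)))"
    by (simp only: eq)
  also have "\<dots> = e (B (ofQ \<beta>) (ofZ (v1,v2,v3)) + B (ofQ \<beta>) (ofZ (w1,w2,w3)))"
    by (simp only: e_add[of _ "- B (ofQ \<beta>) (1,0,1)"] e_B101[OF \<beta>] mult_1_right)
  also have "\<dots> = chi \<beta> (v1,v2,v3) * chi \<beta> (w1,w2,w3)"
    unfolding chi_def e_add ..
  finally show ?thesis .
qed

lemma chi_out:
  assumes "((v1,v2,v3),(w1,w2,w3)) \<notin> Pset" and \<beta>: "\<beta> \<in> setB"
  shows "chi \<beta> (v1,v2,v3) * chi \<beta> (w1,w2,w3) = 1"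
proof -
  have "even (v1+w1+v3+w3)" "even (v2+w2)" using assms(1) unfolding Pset_iff by auto
  then obtain m n where m: "v1+w1+v3+w3 = 2*m" and n: "v2+w2 = 2*n"
    using dvd_def by (metis)
  have cm: "(of_int v1 :: complex) + of_int w1 = 2 * of_int m - of_int v3 - of_int w3"
    using arg_cong[OF m, of "of_int :: int \<Rightarrow> complex"] by (simp add: algebra_simps)
  have cn: "(of_int v2 :: complex) + of_int w2 = 2 * of_int n"
    using arg_cong[OF n, of "of_int :: int \<Rightarrow> complex"] by simp
  have sum: "chi \<beta> (v1,v2,v3) * chi \<beta> (w1,w2,w3)
      = e (B (ofQ \<beta>) (2 * of_int m - of_int v3 - of_int w3, 2 * of_int n, of_int v3 + of_int w3))"
    unfolding chi_def e_add[symmetric] by (simp only: ofZ.simps Blin2' cm cn)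
  have "\<exists>j. B (ofQ \<beta>) (2 * of_int m - of_int v3 - of_int w3, 2 * of_int n, of_int v3 + of_int w3) = of_int j"
    using \<beta> unfolding setB_def
  proof (elim insertE emptyE)
    assume "\<beta> = (0,0,0)" then show ?thesis by (intro exI[of _ 0]) simp
  next
    assume "\<beta> = (0,1/2,0)" then show ?thesis
      by (intro exI[of _ "2*n - m"]) (simp add: of_rat_divide field_simps)
  next
    assume "\<beta> = (1/2,0,0)" then show ?thesis
      by (intro exI[of _ "2*m - v3 - w3 - n"]) (simp add: of_rat_divide field_simps)
  next
    assume "\<beta> = (1/2,1/2,0)" then show ?thesis
      by (intro exI[of _ "m + n - v3 - w3"]) (simp add: of_rat_divide field_simps)
  qed
  then show ?thesis unfolding sum using e_int by auto
qed


definition HH :: "rat\<times>rat\<times>rat \<Rightarrow> rat\<times>rat\<times>rat \<Rightarrow> complex \<Rightarrow> cvec3 \<Rightarrow> (int\<times>int\<times>int)\<times>(int\<times>int\<times>int) \<Rightarrow> complex" where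
  "HH \<alpha> \<beta> \<tau> z = (\<lambda>(v,w). (chi \<beta> v * chi \<beta> w - 1) * (gg \<alpha> \<tau> z v * gg \<alpha> \<tau> z w))"

lemma H_psi:
  assumes p: "p \<in> Pset" and \<beta>: "\<beta> \<in> setB"
  shows "HH (1/2,0,1/2) \<beta> \<tau> z (psi p) = HH (0,0,0) \<beta> \<tau> z p"
proof -
  obtain v1 v2 v3 w1 w2 w3 where pe: "p = ((v1,v2,v3),(w1,w2,w3))" by (cases p) auto
  show ?thesis
  proof (cases "odd (v1+w1+v3+w3)")
    case True
    then obtain k where k: "2*k = v1+w1+v3+w3-1" and ps: "psi p = ((k-w3, v2, k-w1),(k-v3, w2, k-v1))"
      using psi_A unfolding pe by blast
    have c: "chi \<beta> (k-w3, v2, k-w1) * chi \<beta> (k-v3, w2, k-v1) = chi \<beta> (v1,v2,v3) * chi \<beta> (w1,w2,w3)"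
      by (rule chi_shift[OF _ _ _ \<beta>]) (use k in linarith)+
    have "HH (1/2,0,1/2) \<beta> \<tau> z (psi p) = HH (1/2,0,1/2) \<beta> \<tau> z ((k-w3, v2, k-w1),(k-v3, w2, k-v1))"
      by (simp only: ps)
    then show ?thesis unfolding pe HH_def using c gg_A[OF k, of \<tau> z] by simp
  next
    case False
    then have o2: "odd (v2+w2)" using p unfolding pe Pset_iff by blast
    then obtain k where k: "2*k = v2+w2-1" and ps: "psi p = ((w1+k-w2, v2, w3+k-w2),(v1-k+w2-1, w2, v3-k+w2-1))"
      using psi_B False unfolding pe by blast
    have c: "chi \<beta> (w1+k-w2, v2, w3+k-w2) * chi \<beta> (v1-k+w2-1, w2, v3-k+w2-1) = chi \<beta> (v1,v2,v3) * chi \<beta> (w1,w2,w3)"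
      by (rule chi_shift[OF _ _ _ \<beta>]) (use k in linarith)+
    have "HH (1/2,0,1/2) \<beta> \<tau> z (psi p) = HH (1/2,0,1/2) \<beta> \<tau> z ((w1+k-w2, v2, w3+k-w2),(v1-k+w2-1, w2, v3-k+w2-1))"
      by (simp only: ps)
    then show ?thesis unfolding pe HH_def using c gg_B[OF k, of \<tau> z] by simp
  qed
qed

lemma HH_out:
  assumes "p \<notin> Pset" "\<beta> \<in> setB"
  shows "HH \<alpha> \<beta> \<tau> z p = 0"
proof -
  obtain v1 v2 v3 w1 w2 w3 where pe: "p = ((v1,v2,v3),(w1,w2,w3))" by (cases p) auto
  show ?thesis unfolding pe HH_def using chi_out[OF assms(1)[unfolded pe] assms(2)] by simp
qed

lemma key:
  assumes \<beta>: "\<beta> \<in> setB"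
  shows "infsum (HH (1/2,0,1/2) \<beta> \<tau> z) UNIV = infsum (HH (0,0,0) \<beta> \<tau> z) UNIV"
proof -
  have 1: "infsum (HH (1/2,0,1/2) \<beta> \<tau> z) UNIV = infsum (HH (1/2,0,1/2) \<beta> \<tau> z) Pset"
    by (rule infsum_cong_neutral) (use HH_out \<beta> in auto)
  have 2: "infsum (HH (0,0,0) \<beta> \<tau> z) Pset = infsum (HH (1/2,0,1/2) \<beta> \<tau> z) Pset"
    by (rule infsum_reindex_bij_witness[where i=psi_inv and j=psi])
       (auto simp: psi_inv_psi psi_P psi_psi_inv psi_inv_P H_psi \<beta>)
  have 3: "infsum (HH (0,0,0) \<beta> \<tau> z) UNIV = infsum (HH (0,0,0) \<beta> \<tau> z) Pset"
    by (rule infsum_cong_neutral) (use HH_out \<beta> in auto)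
  show ?thesis using 1 2 3 by simp
qed

theorem theorem7p13:
  shows "(\<forall>c :: nat \<Rightarrow> complex.
            (\<forall>\<tau> z. Im \<tau> > 0 \<longrightarrow> (\<Sum>i<5. c i * F5 i \<tau> z) = 0) \<longrightarrow> (\<forall>i<5. c i = 0))
       \<and> (\<forall>\<alpha>\<in>setA. \<forall>\<beta>\<in>setB. \<forall>\<tau> z. Im \<tau> > 0 \<longrightarrow>
            theta \<alpha> \<beta> \<tau> z ^ 2 + theta (0,0,0) (0,0,0) \<tau> z ^ 2
            = theta \<alpha> (0,0,0) \<tau> z ^ 2 + theta (0,0,0) \<beta> \<tau> z ^ 2)"
proof (rule conjI)
  show "\<forall>c :: nat \<Rightarrow> complex.
            (\<forall>\<tau> z. Im \<tau> > 0 \<longrightarrow> (\<Sum>i<5. c i * F5 i \<tau> z) = 0) \<longrightarrow> (\<forall>i<5. c i = 0)"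
    using indep by blast
next
  show "\<forall>\<alpha>\<in>setA. \<forall>\<beta>\<in>setB. \<forall>\<tau> z. Im \<tau> > 0 \<longrightarrow>
            theta \<alpha> \<beta> \<tau> z ^ 2 + theta (0,0,0) (0,0,0) \<tau> z ^ 2
            = theta \<alpha> (0,0,0) \<tau> z ^ 2 + theta (0,0,0) \<beta> \<tau> z ^ 2"
  proof (intro ballI allI impI)
  fix \<alpha> \<beta> \<tau> z
  assume \<alpha>: "\<alpha> \<in> setA" and \<beta>: "\<beta> \<in> setB" and \<tau>: "Im \<tau> > 0"
  show "theta \<alpha> \<beta> \<tau> z ^ 2 + theta (0,0,0) (0,0,0) \<tau> z ^ 2
            = theta \<alpha> (0,0,0) \<tau> z ^ 2 + theta (0,0,0) \<beta> \<tau> z ^ 2"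
  proof (cases "\<alpha> = (0,0,0)")
    case True
    then show ?thesis by (simp add: add.commute)
  next
    case False
    then have a: "\<alpha> = (1/2,0,1/2)" using \<alpha> unfolding setA_def by auto
    have d1: "theta \<alpha> \<beta> \<tau> z ^2 - theta \<alpha> (0,0,0) \<tau> z ^2 = infsum (HH (1/2,0,1/2) \<beta> \<tau> z) UNIV"
      unfolding a HH_def by (rule theta_sq_diff[OF \<tau>])
    have d2: "theta (0,0,0) \<beta> \<tau> z ^2 - theta (0,0,0) (0,0,0) \<tau> z ^2 = infsum (HH (0,0,0) \<beta> \<tau> z) UNIV"
      unfolding HH_def by (rule theta_sq_diff[OF \<tau>])
    have "theta \<alpha> \<beta> \<tau> z ^2 - theta \<alpha> (0,0,0) \<tau> z ^2 = theta (0,0,0) \<beta> \<tau> z ^2 - theta (0,0,0) (0,0,0) \<tau> z ^2"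
      using d1 d2 key[OF \<beta>] by simp
    then show ?thesis by (simp add: algebra_simps)
  qed
  qed
qed


end
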